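(* Let $n\ge1$, $k_1,k_2,\ell_2\ge0$ and $\ell_1\ge-1$ be integers with $k_1+k_2=\ell_1+\ell_2=d$ and $k_2<\ell_2$, and suppose that the pairs $(n+d+2,k_1)$, $(n+k_2+1,k_2)$, $(n+d+2,\ell_1)$, $(n+\ell_2+1,\ell_2)$ are valid. Then, regarding both sides as polynomials in $q$, the leading term of $$u(f^*(\cdot,q),n+d+2,q,k_1,k_2)-u(f^*(\cdot,q),n+d+2,q,\ell_1,\ell_2)$$ is $q^{2k_1+k_2}$; in particular $u(f^*(\cdot,q),n+d+2,q,k_1,k_2)>u(f^*(\cdot,q),n+d+2,q,\ell_1,\ell_2)$ for all sufficiently large $q$.
   Context: A pair of integers $(m,k)$ is valid if $-1\le k\le\frac{m-1}{2}$. For a function $\phi$ on integers $\ge-1$ with $\phi(-1)=0$, $m\ge1$ and valid $(m,k)$, let $u(\phi,m,q,k)=q^{2k+2}\phi(m-k-1)+\phi(k)+\bigl(\sum_{i=0}^kq^i\bigr)\bigl(\sum_{j=k}^{m-2}q^j\bigr)$ (empty sums are $0$), and for integers $k_1,k_2$ with $(m,k_1)$ and $(m-k_1-1,k_2)$ valid let $u(\phi,m,q,k_1,k_2)=q^{2k_1+2}u(\phi,m-k_1-1,q,k_2)+\phi(k_1)+\bigl(\sum_{i=0}^{k_1}q^i\bigr)\bigl(\sum_{j=k_1}^{m-2}q^j\bigr)$. Let $k^*(m)=m-2^{\lfloor\log_2 m\rfloor}$. The polynomials $f^*(m,q)$ are defined by $f^*(-1,q)=f^*(0,q)=f^*(1,q)=0$,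 $f^*(2,q)=1$, $f^*(3,q)=q^2+1$, $f^*(4,q)=q^4+2q^2+q+1$ and $f^*(m,q)=u(f^*(\cdot,q),m,q,k^*(m))$ for $m\ge5$. *)

theory Defs
  imports "HOL-Computational_Algebra.Polynomial" "HOL-Library.Discrete_Functions"
begin

text \<open>Polynomials in the variable q are elements of type int poly; q itself is monom 1 1.
  Integer arguments m, k range over int (k may be -1).\<close>

definition valid :: "int \<Rightarrow> int \<Rightarrow> bool" where
  "valid m k \<longleftrightarrow> -1 \<le> k \<and> 2 * k \<le> m - 1"

text \<open>geo a b = sum of q^j for j = a..b (empty if a > b); only nonnegative exponents
  occur (a negative lower index only arises where the companion factor is 0).\<close>
definition geo :: "int \<Rightarrow> int \<Rightarrow> int poly" where
  "geo a b = (\<Sum>j\<in>{a..b}. if 0 \<le> j then monom 1 (nat j) else 0)"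

definition u1 :: "(int \<Rightarrow> int poly) \<Rightarrow> int \<Rightarrow> int \<Rightarrow> int poly" where
  "u1 \<phi> m k = monom 1 (nat (2 * k + 2)) * \<phi> (m - k - 1) + \<phi> k + geo 0 k * geo k (m - 2)"

definition u2 :: "(int \<Rightarrow> int poly) \<Rightarrow> int \<Rightarrow> int \<Rightarrow> int \<Rightarrow> int poly" where
  "u2 \<phi> m k1 k2 = monom 1 (nat (2 * k1 + 2)) * u1 \<phi> (m - k1 - 1) k2 + \<phi> k1
     + geo 0 k1 * geo k1 (m - 2)"

definition kstar :: "int \<Rightarrow> int" where
  "kstar m = m - 2 ^ floor_log (nat m)"

lemma kstar_bounds:
  assumes "m \<ge> 5" shows "0 \<le> kstar m" "kstar m < m"
proof -
  have "2 ^ floor_log (nat m) \<le> nat m" using assms floor_log_exp2_le[of "nat m"] by simp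
  hence "(2::int) ^ floor_log (nat m) \<le> m" using assms
  proof -
    have "int (2 ^ floor_log (nat m)) \<le> int (nat m)" using \<open>2 ^ floor_log (nat m) \<le> nat m\<close> by linarith
    thus ?thesis using assms by simp
  qed
  thus "0 \<le> kstar m" unfolding kstar_def by simp
  have "(0::int) < 2 ^ floor_log (nat m)" by simp
  thus "kstar m < m" unfolding kstar_def by simp
qed

function fstar :: "int \<Rightarrow> int poly" where
  "fstar m = (if m \<le> 1 then 0
     else if m = 2 then 1
     else if m = 3 then monom 1 2 + 1
     else if m = 4 then monom 1 4 + monom 2 2 + monom 1 1 + 1
     else monom 1 (nat (2 * kstar m + 2)) * fstar (m - kstar m - 1) + fstar (kstar m)
            + geo 0 (kstar m) * geo (kstar m) (m - 2))"
  by pat_completeness auto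
termination
proof (relation "measure (\<lambda>m. nat (m + 1))")
  show "wf (measure (\<lambda>m. nat (m + 1)))" by simp
next
  fix m :: int
  assume a: "\<not> m \<le> 1" "m \<noteq> 2" "m \<noteq> 3" "m \<noteq> 4"
  hence m5: "m \<ge> 5" by linarith
  note b = kstar_bounds[OF m5]
  show "(m - kstar m - 1, m) \<in> measure (\<lambda>m. nat (m + 1))" using b m5 by simp
  show "(kstar m, m) \<in> measure (\<lambda>m. nat (m + 1))" using b m5 by simp
qed

text \<open>The recursive clause agrees with the paper's definition f*(m) = u(f*, m, q, k*(m)).\<close>
declare fstar.simps[simp del]

lemma fstar_rec: "m \<ge> 5 \<Longrightarrow> fstar m = u1 fstar m (kstar m)"
  by (subst fstar.simps) (simp add: u1_def)

end

theory Submission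
  imports Defs
begin


abbreviation (input) xx :: "int poly" where "xx \<equiv> [:0,1:]"

lemma monom1_eq: "monom (1::int) n = xx ^ n"
  by (simp add: monom_altdef)

definition vanish :: "int poly \<Rightarrow> int \<Rightarrow> bool" where
  "vanish p B \<longleftrightarrow> (\<forall>j::nat. B \<le> int j \<longrightarrow> coeff p j = 0)"

lemma vanish_mono: "vanish p B \<Longrightarrow> B \<le> C \<Longrightarrow> vanish p C"
  unfolding vanish_def by auto
lemma vanish_add: "vanish p B \<Longrightarrow> vanish r B \<Longrightarrow> vanish (p + r) B"
  unfolding vanish_def by auto
lemma vanish_diff: "vanish p B \<Longrightarrow> vanish r B \<Longrightarrow> vanish (p - r) B"
  unfolding vanish_def by auto
lemma vanish_uminus: "vanish p B \<Longrightarrow> vanish (- p) B"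
  unfolding vanish_def by auto
lemma vanish_zero: "vanish 0 B"
  unfolding vanish_def by auto
lemma vanish_deg: "vanish p B \<Longrightarrow> p \<noteq> 0 \<Longrightarrow> int (degree p) < B"
  unfolding vanish_def by (metis leading_coeff_0_iff not_le)
lemma vanish_degI: "int (degree p) < B \<Longrightarrow> vanish p B"
  unfolding vanish_def by (auto intro: coeff_eq_0)

lemma vanish_mult: "vanish p B \<Longrightarrow> vanish r C \<Longrightarrow> vanish (p * r) (B + C - 1)"
proof -
  assume a: "vanish p B" "vanish r C"
  show ?thesis
  proof (cases "p = 0 \<or> r = 0")
    case True thus ?thesis by (auto simp: vanish_zero)
  next
    case False
    hence "int (degree p) < B" "int (degree r) < C" using a vanish_deg by auto
    moreover have "degree (p*r) \<le> degree p + degree r" by (rule degree_mult_le)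
    ultimately show ?thesis by (intro vanish_degI) linarith
  qed
qed

lemma vanish_xpow: "vanish (xx ^ n) (int n + 1)"
  by (rule vanish_degI) (simp add: monom1_eq[symmetric] degree_monom_eq)

lemma vanish_geo: "vanish (geo a b) (b + 1)"
  unfolding vanish_def geo_def
  by (auto simp: coeff_sum coeff_monom intro!: sum.neutral)

lemma geo_empty: "b < a \<Longrightarrow> geo a b = 0"
  unfolding geo_def by simp

lemma geo_snoc: "a \<le> b + 1 \<Longrightarrow> 0 \<le> b + 1 \<Longrightarrow> geo a (b+1) = geo a b + xx ^ nat (b+1)"
proof -
  assume h: "a \<le> b + 1" "0 \<le> b + 1"
  have "{a..b+1} = insert (b+1) {a..b}" using h by auto
  thus ?thesis unfolding geo_def using h by (simp add: monom1_eq add.commute)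
qed

lemma geo_lin: assumes "0 \<le> a" "a \<le> b + 1" shows "[:-1,1:] * geo a b = xx ^ nat (b+1) - xx ^ nat a"
proof -
  have "a - 1 \<le> b" using assms by simp
  thus ?thesis
proof (induction b rule: int_ge_induct)
  case base
  then show ?case by (simp add: geo_empty)
next
  case (step i)
  have "[:-1,1:] * geo a (i+1) = [:-1,1:] * geo a i + [:-1,1:] * xx ^ nat (i+1)"
  proof -
    have "geo a (i+1) = geo a i + xx ^ nat (i+1)" using step assms(1) by (intro geo_snoc) auto
    thus ?thesis by (simp only: distrib_left)
  qed
  also have "\<dots> = xx ^ nat (i+1) - xx ^ nat a + [:-1,1:] * xx ^ nat (i+1)"
    using step by simp
  also have "\<dots> = xx ^ nat (i+1+1) - xx ^ nat a"
  proof -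
    have "nat (i+1+1) = Suc (nat (i+1))" using step assms(1) by simp
    moreover have "[:-1,1:] = xx - (1::int poly)" by (simp add: one_pCons)
    ultimately show ?thesis by (simp add: algebra_simps)
  qed
  finally show ?case .
qed
qed

lemma lin_nz: "[:-1,1:] \<noteq> (0::int poly)" by simp

lemma geo_shift: "0 \<le> a \<Longrightarrow> xx * geo a b = geo (a+1) (b+1)"
proof (cases "a \<le> b + 1")
  case True
  assume a: "0 \<le> a"
  have "[:-1,1:] * (xx * geo a b) = [:-1,1:] * geo (a+1) (b+1)"
  proof -
    have "[:-1,1:] * (xx * geo a b) = xx * ([:-1,1:] * geo a b)" by (simp add: algebra_simps)
    also have "\<dots> = xx * (xx ^ nat (b+1) - xx ^ nat a)" using geo_lin[OF a True] by simp
    also have "\<dots> = xx ^ nat (b+1+1) - xx ^ nat (a+1)"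
    proof -
      have "nat (b+1+1) = Suc (nat (b+1))" "nat (a+1) = Suc (nat a)" using a True by auto
      thus ?thesis by (simp add: algebra_simps)
    qed
    also have "\<dots> = [:-1,1:] * geo (a+1) (b+1)" using geo_lin[of "a+1" "b+1"] a True by simp
    finally show ?thesis .
  qed
  thus ?thesis using lin_nz by (metis mult_left_cancel)
next
  case False
  thus ?thesis by (simp add: geo_empty)
qed

lemma geo0: "0 \<le> k \<Longrightarrow> geo 0 k = 1 + geo 1 k"
proof -
  assume k: "0 \<le> k"
  have "{0..k} = insert 0 {1..k}" using k by auto
  thus ?thesis unfolding geo_def by simp
qed


lemma f_le1: "m \<le> 1 \<Longrightarrow> fstar m = 0"
  by (subst fstar.simps) simp
lemma f2: "fstar 2 = 1"
  by (subst fstar.simps) simp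
lemma f3: "fstar 3 = xx^2 + 1"
  by (subst fstar.simps) (simp add: monom1_eq)
lemma f4: "fstar 4 = xx^4 + 2 * xx^2 + xx + 1"
  by (subst fstar.simps) (simp add: monom_altdef numeral_poly)

lemma kstar_lt: assumes "m \<ge> 5" shows "2 * kstar m < m" "0 \<le> kstar m"
proof -
  have "nat m < 2 * 2 ^ floor_log (nat m)" by (rule floor_log_exp2_gt)
  hence "int (nat m) < int (2 * 2 ^ floor_log (nat m))" by linarith
  hence "m < 2 * 2 ^ floor_log (nat m)" using assms by simp
  thus "2 * kstar m < m" unfolding kstar_def by simp
  show "0 \<le> kstar m" using kstar_bounds[OF assms] by simp
qed

lemma vanish_f: "vanish (fstar m) (2*m - 3)"
proof (induction m rule: fstar.induct)
  case (1 m)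
  show ?case
  proof (cases "m \<le> 4")
    case True
    hence "m \<le> 1 \<or> m = 2 \<or> m = 3 \<or> m = 4" by auto
    thus ?thesis
    proof (elim disjE)
      assume "m \<le> 1" thus ?thesis by (simp add: f_le1 vanish_zero)
    next
      assume "m = 2" thus ?thesis by (auto simp: f2 intro: vanish_degI)
    next
      have c: "vanish (1::int poly) 1" "vanish (2::int poly) 1" by (auto intro!: vanish_degI simp: numeral_poly)
      assume "m = 3" thus ?thesis
        by (auto simp: f3 intro!: vanish_add vanish_mono[OF vanish_xpow] vanish_mono[OF c(1)])
    next
      have c: "vanish (1::int poly) 1" "vanish (2::int poly) 1" by (auto intro!: vanish_degI simp: numeral_poly)
      have d: "vanish (2 * xx^2) 3" using vanish_mult[OF c(2) vanish_xpow[of 2]] by simp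
      have e: "vanish xx 5" using vanish_mono[OF vanish_xpow[of 1]] by simp
      assume "m = 4" thus ?thesis
        by (auto simp: e f4 intro!: vanish_add vanish_mono[OF vanish_xpow] vanish_mono[OF c(1)] vanish_mono[OF d])
    qed
  next
    case False
    hence m5: "m \<ge> 5" by simp
    define k where "k = kstar m"
    have k: "0 \<le> k" "2 * k < m" using kstar_lt[OF m5] k_def by auto
    have IH1: "vanish (fstar (m - k - 1)) (2 * (m - k - 1) - 3)" using 1 False k_def by auto
    have IH2: "vanish (fstar k) (2 * k - 3)" using 1 False k_def by auto
    have e: "fstar m = xx ^ nat (2*k+2) * fstar (m - k - 1) + fstar k + geo 0 k * geo k (m - 2)"
      using fstar_rec[OF m5] k_def by (simp add: u1_def monom1_eq)
    have v1: "vanish (xx ^ nat (2*k+2) * fstar (m - k - 1)) (2*m-3)"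
      using vanish_mult[OF vanish_xpow[of "nat (2*k+2)"] IH1] k by (simp add: algebra_simps)
    have v2: "vanish (fstar k) (2*m-3)" using vanish_mono[OF IH2] k by simp
    have v3: "vanish (geo 0 k * geo k (m - 2)) (2*m-3)"
      using vanish_mult[OF vanish_geo[of 0 k] vanish_geo[of k "m-2"]] k m5
      by (auto elim!: vanish_mono)
    show ?thesis unfolding e by (intro vanish_add v1 v2 v3)
  qed
qed


lemma kstar5: "kstar 5 = 1"
proof -
  have "floor_log (nat 5) = 2" by (rule floor_log_eqI) auto
  thus ?thesis unfolding kstar_def by simp
qed

lemma f4_u1: "fstar 4 = u1 fstar 4 0"
proof -
  have "geo 0 0 = 1" unfolding geo_def by simp
  moreover have "geo 0 2 = 1 + xx + xx^2"
  proof -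
    have "geo 0 2 = geo 0 1 + xx ^ nat 2" using geo_snoc[of 0 1] by simp
    moreover have "geo 0 1 = geo 0 0 + xx ^ nat 1" using geo_snoc[of 0 0] by simp
    moreover have "geo 0 0 = 1" unfolding geo_def by simp
    ultimately show ?thesis by simp
  qed
  ultimately show ?thesis unfolding u1_def
    by (simp add: f4 f3 f_le1 monom1_eq algebra_simps numeral_poly)
qed

lemma kstar_pred: assumes "m \<ge> 6" "kstar m \<ge> 1" shows "kstar (m-1) = kstar m - 1"
proof -
  define L where "L = floor_log (nat m)"
  have "nat m < 2 * 2 ^ L" unfolding L_def by (rule floor_log_exp2_gt)
  hence "int (nat m) < int (2 * 2 ^ L)" by linarith
  hence a: "m < 2 * 2 ^ L" using assms by simp
  have b: "2 ^ L \<le> m - 1" using assms(2) unfolding kstar_def L_def by simp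
  have "floor_log (nat (m-1)) = L"
  proof (rule floor_log_eqI)
    show "0 < nat (m-1)" using assms by simp
    have "int (2 ^ L) \<le> m - 1" using b by simp
    thus "2 ^ L \<le> nat (m-1)" using assms by (subst le_nat_iff) auto
    have "m - 1 < int (2 * 2 ^ L)" using a by simp
    thus "nat (m-1) < 2 * 2 ^ L" using assms by (subst nat_less_iff) auto
  qed
  thus ?thesis unfolding kstar_def L_def by simp
qed

lemma f_pred_rec: assumes "m \<ge> 5" "kstar m \<ge> 1"
  shows "fstar (m-1) = u1 fstar (m-1) (kstar m - 1)"
proof (cases "m = 5")
  case True
  hence "m - 1 = 4" "kstar m - 1 = 0" using kstar5 by simp_all
  thus ?thesis using f4_u1 by (simp only:)
next
  case False
  hence "m - 1 \<ge> 5" using assms by simp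
  hence "fstar (m-1) = u1 fstar (m-1) (kstar (m-1))" by (rule fstar_rec)
  moreover have "kstar (m-1) = kstar m - 1" using kstar_pred[of m] assms False by simp
  ultimately show ?thesis by (simp only:)
qed


lemma delta: "vanish (fstar m - xx^2 * fstar (m-1)) (m-1)"
proof (cases "m \<le> 4")
  case True
  hence "m \<le> 1 \<or> m = 2 \<or> m = 3 \<or> m = 4" by auto
  thus ?thesis
  proof (elim disjE)
    assume "m \<le> 1" thus ?thesis by (simp add: f_le1 vanish_zero)
  next
    assume "m = 2" thus ?thesis by (auto simp: f2 f_le1 intro: vanish_degI)
  next
    assume "m = 3" thus ?thesis by (auto simp: f2 f3 intro: vanish_degI)
  next
    assume m: "m = 4"
    have "fstar 4 - xx^2 * fstar 3 = xx^2 + xx + 1"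
      by (simp add: f4 f3 algebra_simps numeral_poly)
    moreover have "vanish (xx^2 + xx + 1) 3"
    proof -
      have "vanish xx 3" using vanish_mono[OF vanish_xpow[of 1], of 3] by simp
      moreover have "vanish (xx^2) 3" using vanish_xpow[of 2] by simp
      moreover have "vanish 1 3" using vanish_mono[OF vanish_xpow[of 0], of 3] by simp
      ultimately show ?thesis by (intro vanish_add)
    qed
    ultimately show ?thesis using m by simp
  qed
next
  case False
  hence m5: "m \<ge> 5" by simp
  define k where "k = kstar m"
  have k: "0 \<le> k" "2 * k < m" using kstar_lt[OF m5] k_def by auto
  have e: "fstar m = xx ^ nat (2*k+2) * fstar (m - k - 1) + fstar k + geo 0 k * geo k (m - 2)"
    using fstar_rec[OF m5] k_def by (simp add: u1_def monom1_eq)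
  show ?thesis
  proof (cases "k = 0")
    case True
    have "geo 0 0 = 1" unfolding geo_def by simp
    hence "fstar m - xx^2 * fstar (m-1) = geo 0 (m-2)" using e True by (simp add: f_le1)
    thus ?thesis using vanish_geo[of 0 "m-2"] by simp
  next
    case False
    hence k1: "k \<ge> 1" using k by simp
    have e2: "fstar (m-1) = xx ^ nat (2*k) * fstar (m - k - 1) + fstar (k-1) + geo 0 (k-1) * geo (k-1) (m - 3)"
      using f_pred_rec[OF m5] k1 k_def by (simp add: u1_def monom1_eq)
    have s1: "xx * geo 0 (k-1) = geo 1 k" using geo_shift[of 0 "k-1"] by simp
    have s2: "xx * geo (k-1) (m-3) = geo k (m-2)" using geo_shift[of "k-1" "m-3"] k1 by simp
    have pw: "xx ^ nat (2*k+2) = xx^2 * xx ^ nat (2*k)"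
    proof -
      have "nat (2*k+2) = 2 + nat (2*k)" using k by simp
      thus ?thesis by (simp only: power_add)
    qed
    have h: "xx^2 * fstar (m-1) = xx ^ nat (2*k+2) * fstar (m - k - 1) + xx^2 * fstar (k-1) + geo 1 k * geo k (m-2)"
    proof -
      have "xx^2 * fstar (m-1) = xx^2 * xx ^ nat (2*k) * fstar (m - k - 1) + xx^2 * fstar (k-1) + (xx * geo 0 (k-1)) * (xx * geo (k-1) (m - 3))"
        unfolding e2 by (simp only: distrib_left mult.assoc mult.left_commute power2_eq_square)
      thus ?thesis by (simp only: s1 s2 pw)
    qed
    have d: "fstar m - xx^2 * fstar (m-1) = fstar k - xx^2 * fstar (k-1) + geo k (m-2)"
      unfolding e h geo0[OF k(1)] by (simp add: algebra_simps)
    have v1: "vanish (fstar k) (m-1)" using vanish_f[of k] k by (auto elim!: vanish_mono)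
    have v2: "vanish (xx^2 * fstar (k-1)) (m-1)"
      using vanish_mult[OF vanish_xpow[of 2] vanish_f[of "k-1"]] k by (auto elim!: vanish_mono)
    show ?thesis unfolding d using v1 v2 vanish_geo[of k "m-2"]
      by (intro vanish_add vanish_diff) auto
  qed
qed



lemma stab: "1 \<le> t \<Longrightarrow> vanish (fstar (b + int t) - xx^(2*t) * fstar b) (2*int t + b - 2)"
proof (induction t)
  case 0 thus ?case by simp
next
  case (Suc t)
  show ?case
  proof (cases "t = 0")
    case True
    thus ?thesis using delta[of "b+1"] by simp
  next
    case False
    hence IH: "vanish (fstar (b + int t) - xx^(2*t) * fstar b) (2*int t + b - 2)" using Suc by simp
    have "fstar (b + int (Suc t)) - xx^(2*Suc t) * fstar b
       = (fstar (b + int t + 1) - xx^2 * fstar (b + int t + 1 - 1))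
         + xx^2 * (fstar (b + int t) - xx^(2*t) * fstar b)"
    proof -
      have e: "b + int (Suc t) = b + int t + 1" "b + int t + 1 - 1 = b + int t" by simp_all
      have p: "(xx:: int poly)^(2*Suc t) = xx^2 * xx^(2*t)" by (simp only: mult_Suc_right power_add)
      have g: "\<And>A B C y z :: int poly. A - (y*z)*C = (A - y*B) + y*(B - z*C)"
        by (simp add: algebra_simps)
      show ?thesis unfolding e p by (rule g)
    qed
    moreover have "vanish (fstar (b + int t + 1) - xx^2 * fstar (b + int t + 1 - 1)) (2*int (Suc t) + b - 2)"
      using delta[of "b + int t + 1"] by (rule vanish_mono) simp
    moreover have "vanish (xx^2 * (fstar (b + int t) - xx^(2*t) * fstar b)) (2*int (Suc t) + b - 2)"
      using vanish_mult[OF vanish_xpow[of 2] IH] by simp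
    ultimately show ?thesis by (simp only: vanish_add)
  qed
qed

abbreviation (input) QQ :: "int poly" where "QQ \<equiv> [:-1,1:] * [:-1,1:]"

lemma geoP: assumes "0 \<le> a" "a \<le> M + 1"
  shows "QQ * (geo 0 a * geo a M) = (xx ^ nat (a+1) - 1) * (xx ^ nat (M+1) - xx ^ nat a)"
proof -
  have "QQ * (geo 0 a * geo a M) = ([:-1,1:] * geo 0 a) * ([:-1,1:] * geo a M)"
    by (simp only: mult_ac)
  also have "\<dots> = (xx ^ nat (a+1) - 1) * (xx ^ nat (M+1) - xx ^ nat a)"
    using geo_lin[of 0 a] geo_lin[OF assms] assms by simp
  finally show ?thesis .
qed

lemma G1: fixes N K K2 :: nat
  shows "xx * QQ * (geo 0 (int K - 1) * geo (int K - 1) (int N + int K + int K2 + 1 - 2))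
     = (xx^K - 1) * (xx * xx^N * xx^K * xx^K2 - xx^K)"
proof (cases K)
  case 0 thus ?thesis by (simp add: geo_empty)
next
  case (Suc K')
  have "QQ * (geo 0 (int K') * geo (int K') (int N + int K' + int K2))
     = (xx ^ nat (int K'+1) - 1) * (xx ^ nat (int N + int K' + int K2 + 1) - xx ^ nat (int K'))"
    by (rule geoP) auto
  also have "\<dots> = (xx ^ K - 1) * (xx^N * xx^K * xx^K2 - xx^K')"
  proof -
    have "nat (int K'+1) = K" "nat (int N + int K' + int K2 + 1) = N + K + K2" using Suc by auto
    thus ?thesis by (simp add: power_add)
  qed
  finally have h: "QQ * (geo 0 (int K') * geo (int K') (int N + int K' + int K2))
     = (xx ^ K - 1) * (xx^N * xx^K * xx^K2 - xx^K')" .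
  have "xx * QQ * (geo 0 (int K - 1) * geo (int K - 1) (int N + int K + int K2 + 1 - 2))
     = xx * (QQ * (geo 0 (int K') * geo (int K') (int N + int K' + int K2)))"
    using Suc by (simp add: algebra_simps)
  also have "\<dots> = (xx^K - 1) * (xx * xx^N * xx^K * xx^K2 - xx * xx^K')" unfolding h by (simp add: algebra_simps)
  finally show ?thesis using Suc by simp
qed

lemma G2: fixes N K2 :: nat assumes "N \<ge> 1"
  shows "QQ * (geo 0 (int K2) * geo (int K2) (int N + int K2 + 1 - 2))
     = (xx * xx^K2 - 1) * (xx^N * xx^K2 - xx^K2)"
proof -
  have "QQ * (geo 0 (int K2) * geo (int K2) (int N + int K2 + 1 - 2))
     = (xx ^ nat (int K2+1) - 1) * (xx ^ nat (int N + int K2 + 1 - 2 + 1) - xx ^ nat (int K2))"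
    using assms by (intro geoP) auto
  also have "\<dots> = (xx * xx^K2 - 1) * (xx^N * xx^K2 - xx^K2)"
  proof -
    have "nat (int K2+1) = Suc K2" "nat (int N + int K2 + 1 - 2 + 1) = N + K2" using assms by auto
    thus ?thesis by (simp add: power_add)
  qed
  finally show ?thesis .
qed

lemma ring_id: fixes x Q a b fN fK2 fK G1 G2 :: "'a::comm_ring_1"
  shows "x*Q*(a^2*(x^2*b^2*fN + fK2 + G2) + fK + G1)
       = x^3*a^2*b^2*Q*fN + x*a^2*Q*fK2 + x*a^2*(Q*G2) + x*Q*fK + x*Q*G1"
  by (simp add: algebra_simps power2_eq_square power3_eq_cube)

lemma U: fixes N K K2 :: nat assumes "N \<ge> 1"
  shows "xx * QQ * u2 fstar (int N + int K + int K2 + 1) (int K - 1) (int K2)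
    = xx^3 * (xx^(K+K2))^2 * QQ * fstar (int N) + xx * (xx^K)^2 * QQ * fstar (int K2)
      + xx * QQ * fstar (int K - 1)
      + (xx^2 * (xx^(K+K2))^2 * xx^N - xx^2 * (xx^(K+K2))^2 - xx * xx^N * xx^(K+K2))
      + xx * (xx^K)^2 * xx^K2 + xx^K - (xx^K)^2"
proof -
  define a where "a = xx^K"
  define b where "b = xx^K2"
  define c where "c = xx^N"
  have e1: "monom 1 (nat (2 * (int K - 1) + 2)) = a^2"
  proof -
    have "nat (2 * (int K - 1) + 2) = K * 2" by simp
    thus ?thesis unfolding a_def by (simp add: monom1_eq power_mult)
  qed
  have e2: "monom 1 (nat (2 * int K2 + 2)) = xx^2 * b^2"
  proof -
    have "nat (2 * int K2 + 2) = 2 + K2 * 2" by simp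
    thus ?thesis unfolding b_def by (simp only: monom1_eq power_mult power_add)
  qed
  have m1: "int N + int K + int K2 + 1 - (int K - 1) - 1 = int N + int K2 + 1" by simp
  have m2: "int N + int K2 + 1 - int K2 - 1 = int N" by simp
  let ?G1 = "geo 0 (int K - 1) * geo (int K - 1) (int N + int K + int K2 + 1 - 2)"
  let ?G2 = "geo 0 (int K2) * geo (int K2) (int N + int K2 + 1 - 2)"
  have u: "u2 fstar (int N + int K + int K2 + 1) (int K - 1) (int K2)
     = a^2 * (xx^2 * b^2 * fstar (int N) + fstar (int K2) + ?G2) + fstar (int K - 1) + ?G1"
    unfolding u2_def u1_def m1 m2 e1 e2 by (simp add: mult.assoc)
  have "xx * QQ * u2 fstar (int N + int K + int K2 + 1) (int K - 1) (int K2)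
     = xx^3*a^2*b^2*QQ*fstar (int N) + xx*a^2*QQ*fstar (int K2) + xx*a^2*(QQ*?G2) + xx*QQ*fstar (int K - 1) + xx*QQ*?G1"
    unfolding u by (rule ring_id)
  also have "\<dots> = xx^3*a^2*b^2*QQ*fstar (int N) + xx*a^2*QQ*fstar (int K2) + xx*a^2*((xx * b - 1) * (c * b - b))
      + xx*QQ*fstar (int K - 1) + (a - 1) * (xx * c * a * b - a)"
    unfolding G2[OF assms] G1[of K N K2] a_def b_def c_def by (simp add: mult.assoc)
  also have "\<dots> = xx^3 * (a*b)^2 * QQ * fstar (int N) + xx * a^2 * QQ * fstar (int K2)
      + xx * QQ * fstar (int K - 1)
      + (xx^2 * (a*b)^2 * c - xx^2 * (a*b)^2 - xx * c * (a*b))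
      + xx * a^2 * b + a - a^2"
    by (simp add: algebra_simps power2_eq_square)
  finally have r: "xx * QQ * u2 fstar (int N + int K + int K2 + 1) (int K - 1) (int K2) = xx^3 * (a*b)^2 * QQ * fstar (int N) + xx * a^2 * QQ * fstar (int K2)
      + xx * QQ * fstar (int K - 1)
      + (xx^2 * (a*b)^2 * c - xx^2 * (a*b)^2 - xx * c * (a*b))
      + xx * a^2 * b + a - a^2" .
  have ab: "a * b = xx^(K+K2)" unfolding a_def b_def by (simp add: power_add)
  show ?thesis using r unfolding ab unfolding a_def b_def c_def .
qed



lemma poly_at_top: fixes p :: "real poly"
  shows "lead_coeff p > 0 \<Longrightarrow> degree p > 0 \<Longrightarrow> filterlim (poly p) at_top at_top"
proof (induction p)
  case 0 thus ?case by simp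
next
  case (pCons a p)
  have pnz: "p \<noteq> 0" using pCons.prems(2) by (cases "p = 0") auto
  have lc: "lead_coeff p > 0" using pCons.prems(1) pnz by (simp add: lead_coeff_pCons)
  have ev: "poly (pCons a p) = (\<lambda>x. a + x * poly p x)" by (rule ext) simp
  show ?case
  proof (cases "degree p = 0")
    case True
    hence "p = [:coeff p 0:]" using degree_0_id by metis
    then obtain c where "p = [:c:]" by blast
    hence pc: "poly p = (\<lambda>x. lead_coeff p)" by auto
    have "filterlim (\<lambda>x. x * lead_coeff p) at_top at_top"
      by (rule filterlim_at_top_mult_tendsto_pos[OF tendsto_const lc filterlim_ident])
    hence "filterlim (\<lambda>x. a + x * lead_coeff p) at_top at_top"
      by (rule filterlim_tendsto_add_at_top[OF tendsto_const])
    thus ?thesis unfolding ev pc .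
  next
    case False
    hence "filterlim (poly p) at_top at_top" using pCons.IH lc by simp
    hence "filterlim (\<lambda>x. x * poly p x) at_top at_top"
      by (rule filterlim_at_top_mult_at_top[OF filterlim_ident])
    hence "filterlim (\<lambda>x. a + x * poly p x) at_top at_top"
      by (rule filterlim_tendsto_add_at_top[OF tendsto_const])
    thus ?thesis unfolding ev .
  qed
qed

lemma poly_ev_pos: fixes p :: "real poly"
  assumes "lead_coeff p > 0" shows "eventually (\<lambda>x. poly p x > 0) at_top"
proof (cases "degree p = 0")
  case True
  hence "p = [:coeff p 0:]" using degree_0_id by metis
  then obtain c where "p = [:c:]" by blast
  hence "poly p = (\<lambda>x. lead_coeff p)" by auto
  thus ?thesis using assms by simp
next
  case False
  hence "filterlim (poly p) at_top at_top" using poly_at_top assms by simp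
  thus ?thesis unfolding filterlim_at_top_dense by simp
qed

lemma map_diff: "map_poly real_of_int (p - r) = map_poly real_of_int p - map_poly real_of_int r"
  by (rule poly_eqI) (simp add: coeff_map_poly)

lemma vanish_QQ: "vanish QQ 3"
proof -
  have "vanish [:-1,1:] 2" by (rule vanish_degI) simp
  from vanish_mult[OF this this] show ?thesis by simp
qed

lemma vanish_pw: "vanish ((xx^K)^2) (2 * int K + 1)"
  using vanish_xpow[of "K*2"] by (simp add: power_mult mult.commute)



lemma ring2: fixes x Q s c a b a' b' fN fK2 fL2 fK fL :: "'a::comm_ring_1"
  shows "(x^3*s^2*Q*fN + x*a^2*Q*fK2 + x*Q*fK + (x^2*s^2*c - x^2*s^2 - x*c*s) + x*a^2*b + a - a^2)
 - (x^3*s^2*Q*fN + x*a'^2*Q*fL2 + x*Q*fL + (x^2*s^2*c - x^2*s^2 - x*c*s) + x*a'^2*b' + a' - a'^2)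
 = x*a^2*b + ((x*a^2*Q*fK2 - x*a'^2*Q*fL2) + x*Q*(fK - fL) - x*a'^2*b' + a - a^2 - a' + a'^2)"
  by (simp add: algebra_simps)

lemma ring3: fixes x Q a y F G :: "'a::comm_ring_1"
  shows "x*(a*y)^2*Q*F - x*a^2*Q*G = - (x*a^2*Q*(G - y^2*F))"
  by (simp add: algebra_simps power2_eq_square)

theorem lemma3p42:
  fixes n k1 k2 l1 l2 d :: int
  assumes "n \<ge> 1" and "k1 \<ge> 0" and "k2 \<ge> 0" and "l2 \<ge> 0" and "l1 \<ge> -1"
    and "k1 + k2 = d" and "l1 + l2 = d" and "k2 < l2"
    and "valid (n + d + 2) k1" and "valid (n + k2 + 1) k2"
    and "valid (n + d + 2) l1" and "valid (n + l2 + 1) l2"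
  shows "degree (u2 fstar (n + d + 2) k1 k2 - u2 fstar (n + d + 2) l1 l2) = nat (2 * k1 + k2)
       \<and> lead_coeff (u2 fstar (n + d + 2) k1 k2 - u2 fstar (n + d + 2) l1 l2) = 1
       \<and> (\<forall>\<^sub>F q in at_top. poly (map_poly real_of_int (u2 fstar (n + d + 2) l1 l2)) q
                           < poly (map_poly real_of_int (u2 fstar (n + d + 2) k1 k2)) q)"
proof -
  define N where "N = nat n"
  define K where "K = nat (k1 + 1)"
  define K2 where "K2 = nat k2"
  define L where "L = nat (l1 + 1)"
  define L2 where "L2 = nat l2"
  have hn: "n = int N" using assms N_def by simp
  have hk1: "k1 = int K - 1" using assms K_def by simp
  have hk2: "k2 = int K2" using assms K2_def by simp
  have hl1: "l1 = int L - 1" using assms L_def by simp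
  have hl2: "l2 = int L2" using assms L2_def by simp
  have N1: "N \<ge> 1" using assms hn by simp
  have KL: "L < K" using assms hk1 hk2 hl1 hl2 by simp
  have EE: "L + L2 = K + K2" using assms hk1 hk2 hl1 hl2 by simp
  define t where "t = K - L"
  have t: "K = L + t" "L2 = K2 + t" "t \<ge> 1" using KL EE t_def by auto
  have m1: "n + d + 2 = int N + int K + int K2 + 1" using assms hn hk1 hk2 by simp
  have m2: "n + d + 2 = int N + int L + int L2 + 1" using assms hn hl1 hl2 by simp
  define D where "D = u2 fstar (n + d + 2) k1 k2 - u2 fstar (n + d + 2) l1 l2"
  have D': "D = u2 fstar (int N + int K + int K2 + 1) (int K - 1) (int K2)
       - u2 fstar (int N + int L + int L2 + 1) (int L - 1) (int L2)"
  proof -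
    have "D = u2 fstar (int N + int K + int K2 + 1) k1 k2 - u2 fstar (int N + int L + int L2 + 1) l1 l2"
      unfolding D_def using m1 m2 by metis
    thus ?thesis unfolding hk1 hk2 hl1 hl2 .
  qed
  note UK = U[OF N1, of K K2]
  note UL = U[OF N1, of L L2, unfolded EE]
  define R where "R = (xx * (xx^K)^2 * QQ * fstar (int K2) - xx * (xx^L)^2 * QQ * fstar (int L2))
     + xx * QQ * (fstar (int K - 1) - fstar (int L - 1)) - xx * (xx^L)^2 * xx^L2
     + xx^K - (xx^K)^2 - xx^L + (xx^L)^2"
  have eq: "xx * QQ * D = xx * (xx^K)^2 * xx^K2 + R"
    unfolding D' right_diff_distrib UK UL unfolding R_def by (rule ring2)
  define B where "B = 2 * K + K2 + 1"
  have vR: "vanish R (int B)"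
  proof -
    have T1e: "xx * (xx^K)^2 * QQ * fstar (int K2) - xx * (xx^L)^2 * QQ * fstar (int L2)
      = - (xx * (xx^L)^2 * QQ * (fstar (int K2 + int t) - xx^(2*t) * fstar (int K2)))"
    proof -
      have "xx^K = xx^L * xx^t" "xx^(2*t) = (xx^t)^2" "int L2 = int K2 + int t"
        using t by (simp_all add: power_add power_mult mult.commute)
      thus ?thesis by (simp only: ring3)
    qed
    have vx: "vanish xx 2" using vanish_xpow[of 1] by simp
    have vxl: "vanish (xx * (xx^L)^2 * QQ) (2 * int L + 4)"
      by (rule vanish_mono[OF vanish_mult[OF vanish_mult[OF vx vanish_pw[of L]] vanish_QQ]]) simp
    have v1: "vanish (xx * (xx^K)^2 * QQ * fstar (int K2) - xx * (xx^L)^2 * QQ * fstar (int L2)) (int B)"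
      unfolding T1e
      by (rule vanish_mono[OF vanish_uminus[OF vanish_mult[OF vxl stab[OF t(3), of "int K2"]]]]) (simp add: t B_def)
    have vxq: "vanish (xx * QQ) 4" by (rule vanish_mono[OF vanish_mult[OF vx vanish_QQ]]) simp
    have vf: "vanish (fstar (int K - 1) - fstar (int L - 1)) (int B - 3)"
      using vanish_f[of "int K - 1"] vanish_f[of "int L - 1"] KL B_def
      by (intro vanish_diff) (auto elim!: vanish_mono)
    have v2: "vanish (xx * QQ * (fstar (int K - 1) - fstar (int L - 1))) (int B)"
      by (rule vanish_mono[OF vanish_mult[OF vxq vf]]) simp
    have v3: "vanish (xx * (xx^L)^2 * xx^L2) (int B)"
      by (rule vanish_mono[OF vanish_mult[OF vanish_mult[OF vx vanish_pw[of L]] vanish_xpow[of L2]]])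
        (use KL EE B_def in simp)
    have v4: "vanish (xx^K) (int B)" "vanish ((xx^K)^2) (int B)"
             "vanish (xx^L) (int B)" "vanish ((xx^L)^2) (int B)"
      by (rule vanish_mono[OF vanish_xpow[of K]] vanish_mono[OF vanish_pw[of K]]
         vanish_mono[OF vanish_xpow[of L]] vanish_mono[OF vanish_pw[of L]]; use KL B_def in simp)+
    show ?thesis unfolding R_def
      by (intro vanish_add vanish_diff v1 v2 v3 v4)
  qed
  have M: "xx * (xx^K)^2 * xx^K2 = monom 1 B"
    unfolding B_def monom1_eq by (simp add: power_add power_mult algebra_simps)
  have cP: "coeff (xx * QQ * D) j = (if j = B then 1 else 0)" if "j \<ge> B" for j
  proof -
    have "coeff R j = 0" using vR that unfolding vanish_def by simp
    thus ?thesis unfolding eq M by (simp add: coeff_monom)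
  qed
  have degP: "degree (xx * QQ * D) = B"
  proof (rule antisym)
    show "degree (xx * QQ * D) \<le> B"
    proof (rule degree_le, intro allI impI)
      fix i assume i: "B < i"
      hence "coeff (xx * QQ * D) i = (if i = B then 1 else 0)" by (intro cP) simp
      with i show "coeff (xx * QQ * D) i = 0" by simp
    qed
    show "B \<le> degree (xx * QQ * D)" by (rule le_degree) (use cP[of B] in simp)
  qed
  have lcP: "lead_coeff (xx * QQ * D) = 1" using degP cP[of B] by simp
  have Dnz: "D \<noteq> 0" using lcP by auto
  have dQ: "degree (xx * QQ) = 3" by (simp add: degree_mult_eq)
  have lQ: "lead_coeff (xx * QQ) = 1" by (simp add: lead_coeff_mult)
  have QNZ: "xx * QQ \<noteq> 0" by simp
  have degD: "degree D = B - 3" using degP degree_mult_eq[OF QNZ Dnz] dQ by simp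
  have lcD: "lead_coeff D = 1"
  proof -
    have "lead_coeff (xx * QQ * D) = lead_coeff (xx * QQ) * lead_coeff D" by (rule lead_coeff_mult)
    thus ?thesis unfolding lcP lQ by simp
  qed
  have K1: "K \<ge> 1" using KL by simp
  have g1: "degree D = nat (2 * k1 + k2)" using degD hk1 hk2 K1 B_def by simp
  have lcR: "lead_coeff (map_poly real_of_int D) = 1"
    using lcD by (subst lead_coeff_map_poly_nz) auto
  have g3: "\<forall>\<^sub>F q in at_top. poly (map_poly real_of_int (u2 fstar (n + d + 2) l1 l2)) q
                           < poly (map_poly real_of_int (u2 fstar (n + d + 2) k1 k2)) q"
  proof -
    have "\<forall>\<^sub>F q in at_top. poly (map_poly real_of_int D) q > 0"
      by (rule poly_ev_pos) (simp add: lcR)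
    thus ?thesis unfolding D_def map_diff by simp
  qed
  show ?thesis using g1 lcD g3 unfolding D_def by simp
qed


end
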